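(* Let $\mathcal{M}_1,\mathcal{M}_2$ be transducers over input alphabet $\Sigma$ and output alphabet $\Gamma$, and let $\mathcal{A}_{\mathit{Up}}$ be a deterministic finite automaton recognizing a language $\mathit{Up}\subseteq\Sigma^*$. If $\llbracket\mathcal{M}_1\rrbracket_{|\mathit{Up}}\neq\llbracket\mathcal{M}_2\rrbracket_{|\mathit{Up}}$, then there exists $u\in\mathit{Up}$ with $|u|\leq 2\cdot(|\mathcal{M}_1|\cdot|\mathcal{M}_2|\cdot|\mathcal{A}_{\mathit{Up}}|)^2$ on which $\llbracket\mathcal{M}_1\rrbracket$ and $\llbracket\mathcal{M}_2\rrbracket$ differ, i.e. $u$ lies in exactly one of $\mathrm{dom}(\llbracket\mathcal{M}_1\rrbracket)$, $\mathrm{dom}(\llbracket\mathcal{M}_2\rrbracket)$, or $u$ lies in both and $\llbracket\mathcal{M}_1\rrbracket(u)\neq\llbracket\mathcal{M}_2\rrbracket(u)$.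
   Context: A (subsequential string) transducer is a tuple $\mathcal{M}=(\Sigma,\Gamma,Q,q_0,w_0,\delta,\delta_F)$ with finite input alphabet $\Sigma$, finite output alphabet $\Gamma$, finite state set $Q$, initial state $q_0$, initial production $w_0\in\Gamma^*$, partial transition function $\delta:Q\times\Sigma\to Q\times\Gamma^*$ (write $q\xrightarrow{a|w}q'$ when $\delta(q,a)=(q',w)$) and partial final function $\delta_F:Q\to\Gamma^*$ ($q$ is final if $\delta_F(q)$ is defined). Runs are extended to words: $q\xrightarrow{\varepsilon|\varepsilon}{}^*q$, and if $q\xrightarrow{u|w}{}^*q'$ and $q'\xrightarrow{a|w'}q''$ then $q\xrightarrow{ua|ww'}{}^*q''$. The partial function $\llbracket\mathcal{M}\rrbracket:\Sigma^*\to\Gamma^*$ is $\llbracket\mathcal{M}\rrbracket(u)=w_0\,w\,\delta_F(q)$ if $q_0\xrightarrow{u|w}{}^*q$ with $q$ final, and undefined otherwise; $\mathrm{dom}$ denotes its domain and $\llbracket\mathcal{M}\rrbracket_{|L}$ its restriction to a language $L$ (restrictions are compared as partial functions). $|\mathcal{M}|$ is the number of states of $\mathcal{M}$ and $|\mathcal{A}_{\mathit{Up}}|$ the number of states of $\mathcal{A}_{\mathit{Up}}$. *)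

theory Defs
  imports Main
begin

record ('q, 'a, 'b) transducer =
  t_states :: "'q set"
  t_init :: 'q
  t_init_out :: "'b list"
  t_delta :: "'q \<Rightarrow> 'a \<Rightarrow> ('q \<times> 'b list) option"
  t_final :: "'q \<Rightarrow> 'b list option"

definition wf_transducer ::
  "'a set \<Rightarrow> 'b set \<Rightarrow> ('q, 'a, 'b) transducer \<Rightarrow> bool" where
  "wf_transducer Sig Gam M \<longleftrightarrow>
     finite Sig \<and> finite Gam \<and> finite (t_states M) \<and>
     t_init M \<in> t_states M \<and> set (t_init_out M) \<subseteq> Gam \<and>
     (\<forall>q a. t_delta M q a \<noteq> None \<longrightarrow> q \<in> t_states M \<and> a \<in> Sig) \<and>
     (\<forall>q a q' w. t_delta M q a = Some (q', w) \<longrightarrow> q' \<in> t_states M \<and> set w \<subseteq> Gam) \<and>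
     (\<forall>q. t_final M q \<noteq> None \<longrightarrow> q \<in> t_states M) \<and>
     (\<forall>q w. t_final M q = Some w \<longrightarrow> set w \<subseteq> Gam)"

fun t_run :: "('q, 'a, 'b) transducer \<Rightarrow> 'q \<Rightarrow> 'a list \<Rightarrow> ('q \<times> 'b list) option" where
  "t_run M q [] = Some (q, [])"
| "t_run M q (a # u) =
     (case t_delta M q a of
        None \<Rightarrow> None
      | Some (q', w) \<Rightarrow>
          (case t_run M q' u of None \<Rightarrow> None | Some (q'', w') \<Rightarrow> Some (q'', w @ w')))"

definition t_sem :: "('q, 'a, 'b) transducer \<Rightarrow> 'a list \<Rightarrow> 'b list option" where
  "t_sem M u =
     (case t_run M (t_init M) u of
        None \<Rightarrow> None
      | Some (q, w) \<Rightarrow>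
          (case t_final M q of None \<Rightarrow> None | Some wF \<Rightarrow> Some (t_init_out M @ w @ wF)))"

record ('s, 'a) dfa =
  d_states :: "'s set"
  d_init :: 's
  d_delta :: "'s \<Rightarrow> 'a \<Rightarrow> 's"
  d_accept :: "'s set"

definition wf_dfa :: "'a set \<Rightarrow> ('s, 'a) dfa \<Rightarrow> bool" where
  "wf_dfa Sig A \<longleftrightarrow>
     finite Sig \<and> finite (d_states A) \<and> d_init A \<in> d_states A \<and>
     d_accept A \<subseteq> d_states A \<and>
     (\<forall>s \<in> d_states A. \<forall>a \<in> Sig. d_delta A s a \<in> d_states A)"

definition dfa_lang :: "'a set \<Rightarrow> ('s, 'a) dfa \<Rightarrow> 'a list set" where
  "dfa_lang Sig A = {u. set u \<subseteq> Sig \<and> foldl (d_delta A) (d_init A) u \<in> d_accept A}"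

definition restrict_lang :: "('a list \<Rightarrow> 'b option) \<Rightarrow> 'a list set \<Rightarrow> 'a list \<Rightarrow> 'b option" where
  "restrict_lang f L = (\<lambda>u. if u \<in> L then f u else None)"

end

theory Submission
  imports Defs
begin

lemma run_append:
  "t_run M q (x @ y) = (case t_run M q x of None \<Rightarrow> None | Some (q', a) \<Rightarrow>
      (case t_run M q' y of None \<Rightarrow> None | Some (q'', b) \<Rightarrow> Some (q'', a @ b)))"
  by (induction x arbitrary: q) (auto split: option.split)

definition tl_sem where
  "tl_sem M q w = (case t_run M q w of None \<Rightarrow> None | Some (q', a) \<Rightarrow> map_option (\<lambda>wF. a @ wF) (t_final M q'))"

lemma sem_tl: "t_sem M w = map_option (\<lambda>d. t_init_out M @ d) (tl_sem M (t_init M) w)"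
  unfolding t_sem_def tl_sem_def by (auto split: option.split)

lemma tl_append: "t_run M q x = Some (q', a) \<Longrightarrow> tl_sem M q (x @ w) = map_option (\<lambda>d. a @ d) (tl_sem M q' w)"
  unfolding tl_sem_def
  apply (auto simp: run_append option.map_comp o_def split: option.split)
  subgoal for aa b by (cases "t_final M aa") auto
  done

lemma tl_dead: "t_run M q x = None \<Longrightarrow> tl_sem M q (x @ w) = None"
  unfolding tl_sem_def by (simp add: run_append)

lemma run_states:
  assumes wf: "wf_transducer Sig Gam M"
  shows "q \<in> t_states M \<Longrightarrow> t_run M q w = Some (q', a) \<Longrightarrow> q' \<in> t_states M"
proof (induction w arbitrary: q a)
  case Nil thus ?case by simp
next
  case (Cons c w)
  from Cons.prems(2) obtain p oo where d: "t_delta M q c = Some (p, oo)" by (auto split: option.splits)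
  then have p: "p \<in> t_states M" using wf unfolding wf_transducer_def by blast
  from Cons.prems(2) d obtain o' where "t_run M p w = Some (q', o')" by (auto split: option.splits)
  then show ?case using Cons.IH[OF p] by blast
qed

lemma dfa_states: "wf_dfa Sig A \<Longrightarrow> s \<in> d_states A \<Longrightarrow> set w \<subseteq> Sig \<Longrightarrow> foldl (d_delta A) s w \<in> d_states A"
  by (induction w arbitrary: s) (auto simp: wf_dfa_def)

definition st where "st M w = map_option fst (t_run M (t_init M) w)"

lemma loop:
  assumes "st M x = Some q" "st M (x @ y) = Some q"
  shows "\<exists>a b. t_run M (t_init M) x = Some (q, a) \<and> t_run M q y = Some (q, b)"
  using assms unfolding st_def by (auto simp: run_append split: option.splits)

lemma alive: "t_sem M (x @ w) \<noteq> None \<Longrightarrow> st M x \<noteq> None"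
  unfolding st_def by (cases "t_run M (t_init M) x") (auto simp: sem_tl tl_dead)

lemma cut_dom:
  assumes "st M x = st M (x @ y)"
  shows "(t_sem M (x @ z) = None) = (t_sem M (x @ y @ z) = None)"
proof (cases "t_run M (t_init M) x")
  case None
  have n: "t_sem M (x@w) = None" for w using tl_dead[OF None, of w] by (simp add: sem_tl)
  show ?thesis unfolding n by simp
next
  case (Some p)
  obtain q a where p: "p = (q,a)" by (cases p)
  have r: "t_run M (t_init M) x = Some (q,a)" using Some p by simp
  then have "st M x = Some q" by (simp add: st_def)
  have q2: "st M (x@y) = Some q" using assms \<open>st M x = Some q\<close> by simp
  obtain a' b where "t_run M (t_init M) x = Some (q, a')" and b: "t_run M q y = Some (q, b)"
    using loop[OF \<open>st M x = Some q\<close> q2] by blast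
  have s: "t_sem M (x@w) = map_option (\<lambda>d. t_init_out M @ a @ d) (tl_sem M q w)" for w
    using tl_append[OF r, of w] by (simp add: sem_tl option.map_comp o_def)
  show ?thesis unfolding s tl_append[OF b] by simp
qed

lemma three:
  assumes "st M x = Some q" "st M (x@y1) = Some q" "st M (x@y1@y2) = Some q"
  shows "\<exists>a b c. t_sem M (x@z) = map_option (\<lambda>d. t_init_out M @ a @ d) (tl_sem M q z) \<and>
     t_sem M (x@y1@z) = map_option (\<lambda>d. t_init_out M @ a @ b @ d) (tl_sem M q z) \<and>
     t_sem M (x@y2@z) = map_option (\<lambda>d. t_init_out M @ a @ c @ d) (tl_sem M q z) \<and>
     t_sem M (x@y1@y2@z) = map_option (\<lambda>d. t_init_out M @ a @ b @ c @ d) (tl_sem M q z)"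
proof -
  obtain a b where ab: "t_run M (t_init M) x = Some (q, a)" "t_run M q y1 = Some (q, b)"
    using loop[OF assms(1,2)] by blast
  obtain c where c: "t_run M q y2 = Some (q, c)"
    using loop[of M "x@y1" q y2] assms(2,3) by (simp only: append_assoc) blast
  have s: "t_sem M (x@w) = map_option (\<lambda>d. t_init_out M @ a @ d) (tl_sem M q w)" for w
    using tl_append[OF ab(1), of w] by (simp add: sem_tl option.map_comp o_def)
  have t1: "tl_sem M q (y1@w) = map_option (\<lambda>d. b @ d) (tl_sem M q w)" for w
    using tl_append[OF ab(2)] .
  have t2: "tl_sem M q (y2@w) = map_option (\<lambda>d. c @ d) (tl_sem M q w)" for w
    using tl_append[OF c] .
  show ?thesis
    apply (rule exI[of _ a], rule exI[of _ b], rule exI[of _ c])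
    by (simp only: s t1 t2 option.map_comp o_def append_assoc)
qed

lemma fm1:
  assumes "length a1 \<le> length a2"
    "a1 @ d1 = a2 @ d2" "a1 @ b1 @ d1 = a2 @ b2 @ d2" "a1 @ c1 @ d1 = a2 @ c2 @ d2"
  shows "a1 @ b1 @ c1 @ d1 = a2 @ b2 @ c2 @ d2"
proof -
  have "take (length a1) (a2 @ d2) = a1" using assms(2) by (metis append_eq_conv_conj)
  then have "take (length a1) a2 = a1" using assms(1) by simp
  then obtain t where t: "a2 = a1 @ t" by (metis append_take_drop_id)
  have d1: "d1 = t @ d2" using assms(2) t by simp
  have "b1 @ t = t @ b2" using assms(3) t d1 by simp
  moreover have "c1 @ t = t @ c2" using assms(4) t d1 by simp
  ultimately have "b1 @ c1 @ t = t @ b2 @ c2" by (metis append_assoc)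
  then have "a1 @ b1 @ c1 @ t @ d2 = a1 @ t @ b2 @ c2 @ d2" by (metis append_assoc)
  then show ?thesis using t d1 by simp
qed

lemma fm:
  assumes "a1 @ d1 = a2 @ d2" "a1 @ b1 @ d1 = a2 @ b2 @ d2" "a1 @ c1 @ d1 = a2 @ c2 @ d2"
  shows "a1 @ b1 @ c1 @ d1 = a2 @ b2 @ c2 @ d2"
  using fm1[OF _ assms] fm1[of a2 a1 d2 d1 b2 b1 c2 c1] assms by (cases "length a1 \<le> length a2") auto

lemma take_split: "i \<le> j \<Longrightarrow> take i u @ drop i (take j u) = take j u"
  by (metis append_take_drop_id min.absorb1 take_take)

lemma drop_split: "j \<le> k \<Longrightarrow> drop j (take k u) @ drop k u = drop j u"
  by (metis append_take_drop_id drop_append length_take min_def nat_le_linear take_all drop_all diff_is_0_eq drop_0 append_Nil2)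

theorem mainTheorem7:
  fixes Sig :: "'a set" and Gam :: "'b set"
    and M1 :: "('q1, 'a, 'b) transducer" and M2 :: "('q2, 'a, 'b) transducer"
    and A :: "('s, 'a) dfa" and Up :: "'a list set"
  assumes "wf_transducer Sig Gam M1"
    and "wf_transducer Sig Gam M2"
    and "wf_dfa Sig A"
    and "dfa_lang Sig A = Up"
    and "restrict_lang (t_sem M1) Up \<noteq> restrict_lang (t_sem M2) Up"
  shows "\<exists>u \<in> Up. length u \<le> 2 * (card (t_states M1) * card (t_states M2) * card (d_states A))^2
           \<and> t_sem M1 u \<noteq> t_sem M2 u"
proof -
  define Q1 where "Q1 = t_states M1"
  define Q2 where "Q2 = t_states M2"
  define S where "S = d_states A"
  define N where "N = card Q1 * card Q2 * card S"
  have fin: "finite Q1" "finite Q2" "finite S"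
    using assms(1-3) unfolding Q1_def Q2_def S_def wf_transducer_def wf_dfa_def by auto
  have ne: "card Q1 \<ge> 1" "card Q2 \<ge> 1" "card S \<ge> 1"
    using assms(1-3) fin unfolding Q1_def Q2_def S_def wf_transducer_def wf_dfa_def
    by (auto simp: Suc_le_eq card_gt_0_iff)
  define W where "W = {u \<in> Up. t_sem M1 u \<noteq> t_sem M2 u}"
  from assms(5) obtain u0 where "restrict_lang (t_sem M1) Up u0 \<noteq> restrict_lang (t_sem M2) Up u0"
    by (meson ext)
  then have "u0 \<in> W" unfolding W_def restrict_lang_def by (auto split: if_splits)
  then obtain u where uW: "u \<in> W" and umin: "\<And>v. v \<in> W \<Longrightarrow> length u \<le> length v"
    using ex_has_least_nat[of "\<lambda>v. v \<in> W" u0 length] by blast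
  have uUp: "u \<in> Up" and diff: "t_sem M1 u \<noteq> t_sem M2 u" using uW W_def by auto
  have uSig: "set u \<subseteq> Sig" using assms(4) uUp unfolding dfa_lang_def by auto
  have i1: "t_init M1 \<in> Q1" using assms(1) unfolding wf_transducer_def Q1_def by simp
  have i2: "t_init M2 \<in> Q2" using assms(2) unfolding wf_transducer_def Q2_def by simp
  have i3: "d_init A \<in> S" using assms(3) unfolding wf_dfa_def S_def by simp
  define D where "D w = foldl (d_delta A) (d_init A) w" for w
  define E where "E i = (st M1 (take i u), st M2 (take i u), D (take i u))" for i
  define P where "P = {0..length u}"
  have Dst: "D (take i u) \<in> S" for i
    unfolding D_def
  proof (rule dfa_states[OF assms(3), of "d_init A" "take i u", folded S_def])
    show "d_init A \<in> S" by (rule i3)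
    show "set (take i u) \<subseteq> Sig" using uSig set_take_subset by (metis order_trans)
  qed
  have st1: "st M1 (take i u) = Some q \<Longrightarrow> q \<in> Q1" for i q
    using run_states[OF assms(1)] i1 unfolding st_def Q1_def by auto
  have st2: "st M2 (take i u) = Some q \<Longrightarrow> q \<in> Q2" for i q
    using run_states[OF assms(2)] i2 unfolding st_def Q2_def by auto
  have cutUp: "take i u @ drop j u \<in> Up \<and> length (take i u @ drop j u) < length u"
    if "i < j" "j \<le> length u" "E i = E j" for i j
  proof
    have "D (take i u) = D (take j u)" using \<open>E i = E j\<close> unfolding E_def by simp
    then have "D (take i u @ drop j u) = D (take j u @ drop j u)"
      by (simp only: D_def foldl_append)
    then have "D (take i u @ drop j u) = D u" by simp
    moreover have "set (take i u @ drop j u) \<subseteq> Sig"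
      using uSig set_take_subset set_drop_subset by fastforce
    ultimately show "take i u @ drop j u \<in> Up"
      using uUp assms(4) unfolding dfa_lang_def D_def by auto
    show "length (take i u @ drop j u) < length u" using that by simp
  qed
  have cutNone: "(t_sem M (take i u @ drop j u) = None) = (t_sem M u = None)"
    if "i \<le> j" "j \<le> length u" "st M (take i u) = st M (take j u)" for i j and M :: "('q, 'a, 'b) transducer"
  proof -
    have s: "st M (take i u) = st M (take i u @ drop i (take j u))"
      using that take_split by metis
    have e: "take i u @ drop i (take j u) @ drop j u = u"
      using take_split[OF \<open>i \<le> j\<close>, of u] by (metis append_assoc append_take_drop_id)
    from cut_dom[OF s, of "drop j u"] show ?thesis
      by (simp only: e)
  qed
  have main: "length u + 1 \<le> 3 * N"
  proof (cases "t_sem M1 u \<noteq> None \<and> t_sem M2 u \<noteq> None")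
    case True
    have notriple: False if "i < j" "j < k" "k \<le> length u" "E i = E j" "E j = E k" for i j k
    proof -
      define x where "x = take i u"
      define y1 where "y1 = drop i (take j u)"
      define y2 where "y2 = drop j (take k u)"
      define z where "z = drop k u"
      have xy1: "x @ y1 = take j u" using that take_split[of i j u] unfolding x_def y1_def by simp
      have xy1y2: "x @ y1 @ y2 = take k u"
        using that(2) take_split[of j k u] xy1 unfolding y2_def by (metis append_assoc less_imp_le)
      have "u = (x @ y1 @ y2) @ z" unfolding xy1y2 z_def by simp
      then have u: "u = x @ y1 @ y2 @ z" by simp
      have y2z: "y2 @ z = drop j u" using that(2) drop_split[of j k u] unfolding y2_def z_def by simp
      have w1: "take i u @ drop k u = x @ z" unfolding x_def z_def by simp
      have w2: "take j u @ drop k u = x @ y1 @ z" using xy1 unfolding z_def by simp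
      have w3: "take i u @ drop j u = x @ y2 @ z" using y2z unfolding x_def by simp
      have agree: "t_sem M1 w = t_sem M2 w" if "w \<in> Up" "length w < length u" for w
      proof (rule ccontr)
        assume "t_sem M1 w \<noteq> t_sem M2 w"
        then have "w \<in> W" using that(1) unfolding W_def by simp
        from umin[OF this] that(2) show False by simp
      qed
      have a1: "t_sem M1 (x@z) = t_sem M2 (x@z)"
        using agree[of "take i u @ drop k u"] cutUp[of i k] that w1 by simp
      have a2: "t_sem M1 (x@y1@z) = t_sem M2 (x@y1@z)"
        using agree[of "take j u @ drop k u"] cutUp[of j k] that w2 by simp
      have a3: "t_sem M1 (x@y2@z) = t_sem M2 (x@y2@z)"
        using agree[of "take i u @ drop j u"] cutUp[of i j] that w3 by simp
      have tu1: "t_sem M1 (x@y1@y2@z) \<noteq> None" using True u by simp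
      have tu2: "t_sem M2 (x@y1@y2@z) \<noteq> None" using True u by simp
      obtain q1 where q1: "st M1 x = Some q1" using alive[OF tu1] by blast
      obtain q2 where q2: "st M2 x = Some q2" using alive[OF tu2] by blast
      have E1: "st M1 x = st M1 (take j u)" "st M1 x = st M1 (take k u)"
        using that(4,5) unfolding E_def x_def by simp_all
      have E2: "st M2 x = st M2 (take j u)" "st M2 x = st M2 (take k u)"
        using that(4,5) unfolding E_def x_def by simp_all
      have e1: "st M1 (x@y1) = Some q1" "st M1 (x@y1@y2) = Some q1"
        using q1 E1 xy1 xy1y2 by simp_all
      have e2: "st M2 (x@y1) = Some q2" "st M2 (x@y1@y2) = Some q2"
        using q2 E2 xy1 xy1y2 by simp_all
      obtain a b c where M1: "t_sem M1 (x@z) = map_option (\<lambda>d. t_init_out M1 @ a @ d) (tl_sem M1 q1 z)"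
       "t_sem M1 (x@y1@z) = map_option (\<lambda>d. t_init_out M1 @ a @ b @ d) (tl_sem M1 q1 z)"
       "t_sem M1 (x@y2@z) = map_option (\<lambda>d. t_init_out M1 @ a @ c @ d) (tl_sem M1 q1 z)"
       "t_sem M1 (x@y1@y2@z) = map_option (\<lambda>d. t_init_out M1 @ a @ b @ c @ d) (tl_sem M1 q1 z)"
        using three[OF q1 e1, of z] by blast
      obtain a' b' c' where M2: "t_sem M2 (x@z) = map_option (\<lambda>d. t_init_out M2 @ a' @ d) (tl_sem M2 q2 z)"
       "t_sem M2 (x@y1@z) = map_option (\<lambda>d. t_init_out M2 @ a' @ b' @ d) (tl_sem M2 q2 z)"
       "t_sem M2 (x@y2@z) = map_option (\<lambda>d. t_init_out M2 @ a' @ c' @ d) (tl_sem M2 q2 z)"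
       "t_sem M2 (x@y1@y2@z) = map_option (\<lambda>d. t_init_out M2 @ a' @ b' @ c' @ d) (tl_sem M2 q2 z)"
        using three[OF q2 e2, of z] by blast
      obtain d1 where d1: "tl_sem M1 q1 z = Some d1" using tu1 M1(4) by (cases "tl_sem M1 q1 z") auto
      obtain d2 where d2: "tl_sem M2 q2 z = Some d2" using tu2 M2(4) by (cases "tl_sem M2 q2 z") auto
      have g1: "(t_init_out M1 @ a) @ d1 = (t_init_out M2 @ a') @ d2"
        using a1 M1(1) M2(1) d1 d2 by simp
      have g2: "(t_init_out M1 @ a) @ b @ d1 = (t_init_out M2 @ a') @ b' @ d2"
        using a2 M1(2) M2(2) d1 d2 by simp
      have g3: "(t_init_out M1 @ a) @ c @ d1 = (t_init_out M2 @ a') @ c' @ d2"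
        using a3 M1(3) M2(3) d1 d2 by simp
      have "(t_init_out M1 @ a) @ b @ c @ d1 = (t_init_out M2 @ a') @ b' @ c' @ d2"
        by (rule fm[OF g1 g2 g3])
      then have "t_sem M1 u = t_sem M2 u" using u M1(4) M2(4) d1 d2 by simp
      then show False using diff by simp
    qed
    define g where "g i = (E i, \<exists>h<i. E h = E i)" for i
    have inj: "inj_on g P"
    proof (rule inj_onI)
      fix i j assume ij: "i \<in> P" "j \<in> P" "g i = g j"
      show "i = j"
      proof (rule ccontr)
        assume "i \<noteq> j"
        then consider "i < j" | "j < i" by linarith
        then show False
        proof cases
          case 1
          then have "\<exists>h<i. E h = E i" using ij unfolding g_def by auto
          then obtain h where "h < i" "E h = E i" by auto
          then show False using notriple[of h i j] 1 ij unfolding g_def P_def by auto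
        next
          case 2
          then have "\<exists>h<j. E h = E j" using ij unfolding g_def by auto
          then obtain h where "h < j" "E h = E j" by auto
          then show False using notriple[of h j i] 2 ij unfolding g_def P_def by auto
        qed
      qed
    qed
    have sub: "E ` P \<subseteq> (Some ` Q1) \<times> (Some ` Q2) \<times> S"
    proof
      fix e assume "e \<in> E ` P"
      then obtain i where i: "i \<in> P" "e = E i" by auto
      have "st M1 (take i u) \<noteq> None" using alive[of M1 "take i u" "drop i u"] True by auto
      moreover have "st M2 (take i u) \<noteq> None" using alive[of M2 "take i u" "drop i u"] True by auto
      ultimately show "e \<in> (Some ` Q1) \<times> (Some ` Q2) \<times> S"
        using i st1 st2 Dst unfolding E_def by fastforce
    qed
    have "card (E ` P) \<le> card ((Some ` Q1) \<times> (Some ` Q2) \<times> S)"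
      using sub fin by (intro card_mono) auto
    also have "\<dots> = N" unfolding N_def
      by (simp add: card_cartesian_product card_image)
    finally have cE: "card (E ` P) \<le> N" .
    have "g ` P \<subseteq> E ` P \<times> UNIV" unfolding g_def by auto
    then have "card (g ` P) \<le> card (E ` P \<times> (UNIV :: bool set))"
      using fin unfolding P_def by (intro card_mono) auto
    also have "\<dots> = 2 * card (E ` P)" by (simp add: card_cartesian_product)
    finally have "card P \<le> 2 * card (E ` P)" using card_image[OF inj] by simp
    then show ?thesis using cE unfolding P_def by simp
  next
    case False
    have notboth: "\<not> (st M1 (take i u) = None \<and> st M2 (take i u) = None)" for i
    proof
      assume h: "st M1 (take i u) = None \<and> st M2 (take i u) = None"
      have "t_sem M1 (take i u @ drop i u) = None" using alive[of M1 "take i u" "drop i u"] h by metis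
      moreover have "t_sem M2 (take i u @ drop i u) = None" using alive[of M2 "take i u" "drop i u"] h by metis
      ultimately have "t_sem M1 u = None" "t_sem M2 u = None" by simp_all
      then show False using diff by simp
    qed
    have inj: "inj_on E P"
    proof (rule inj_onI)
      fix i j assume ij: "i \<in> P" "j \<in> P" "E i = E j"
      show "i = j"
      proof (rule ccontr)
        assume "i \<noteq> j"
        have gen: False if "i' < j'" "j' \<le> length u" "E i' = E j'" for i' j'
        proof -
          have c: "take i' u @ drop j' u \<in> Up" "length (take i' u @ drop j' u) < length u"
            using cutUp that by auto
          have n1: "(t_sem M1 (take i' u @ drop j' u) = None) = (t_sem M1 u = None)"
            using cutNone[of i' j' M1] that unfolding E_def by auto
          have n2: "(t_sem M2 (take i' u @ drop j' u) = None) = (t_sem M2 u = None)"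
            using cutNone[of i' j' M2] that unfolding E_def by auto
          have "t_sem M1 (take i' u @ drop j' u) \<noteq> t_sem M2 (take i' u @ drop j' u)"
            using n1 n2 False diff by auto
          then have "take i' u @ drop j' u \<in> W" using c unfolding W_def by auto
          from umin[OF this] c(2) show False by simp
        qed
        show False
        proof (cases "i < j")
          case True then show ?thesis using gen[of i j] ij unfolding P_def by auto
        next
          case False then have "j < i" using \<open>i \<noteq> j\<close> by simp
          then show ?thesis using gen[of j i] ij unfolding P_def by auto
        qed
      qed
    qed
    define T1 where "T1 = (Some ` Q1) \<times> (Some ` Q2) \<times> S"
    define T2 where "T2 = (({None} \<times> (Some ` Q2) \<times> S) :: ('q1 option \<times> 'q2 option \<times> 's) set)"
    define T3 where "T3 = (((Some ` Q1) \<times> {None} \<times> S) :: ('q1 option \<times> 'q2 option \<times> 's) set)"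
    have sub: "E ` P \<subseteq> T1 \<union> T2 \<union> T3"
    proof
      fix e assume "e \<in> E ` P"
      then obtain i where i: "i \<in> P" "e = E i" by auto
      show "e \<in> T1 \<union> T2 \<union> T3"
        using i st1[of i] st2[of i] Dst[of i] notboth[of i] unfolding E_def T1_def T2_def T3_def
        by (cases "st M1 (take i u)"; cases "st M2 (take i u)") auto
    qed
    have fT: "finite T1" "finite T2" "finite T3" using fin unfolding T1_def T2_def T3_def by auto
    have "card (E ` P) \<le> card (T1 \<union> T2 \<union> T3)"
      using sub fT by (intro card_mono) auto
    also have "\<dots> \<le> card T1 + card T2 + card T3"
      using card_Un_le[of "T1 \<union> T2" T3] card_Un_le[of T1 T2] by linarith
    also have "\<dots> = N + card Q2 * card S + card Q1 * card S"
      unfolding N_def T1_def T2_def T3_def by (simp add: card_cartesian_product card_image)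
    also have "\<dots> \<le> 3 * N"
    proof -
      have "card Q2 * card S \<le> N" unfolding N_def using ne by simp
      moreover have "card Q1 * card S \<le> N" unfolding N_def using ne by simp
      ultimately show ?thesis by simp
    qed
    finally show ?thesis using card_image[OF inj] unfolding P_def by simp
  qed
  have N1: "N \<ge> 1" unfolding N_def using ne by simp
  have "length u \<le> 2 * N^2"
  proof (cases "N = 1")
    case True then show ?thesis using main by simp
  next
    case False
    then have "N \<ge> 2" using N1 by simp
    then have "2 * N \<le> N * N" using mult_le_mono1 by blast
    then show ?thesis using main unfolding power2_eq_square by linarith
  qed
  then show ?thesis using uUp diff unfolding N_def Q1_def Q2_def S_def by blast
qed

end
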